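(* Let $X$ satisfy the IHR assumption with hazard-rate lower bound $L>0$, let $n\ge 2$, let $X_1,\dots,X_n$ be i.i.d. copies of $X$ with order statistics $X_{(1)}\ge\cdots\ge X_{(n)}$, and let $k\in\{2,\dots,n\}$. Define $v^l:=\frac{2(n-k+1)}{(k-1)^2L^2}$. Then for all $\lambda\ge 0$, $$\log \mathbb{E}\big[\exp\big(\lambda(\mathbb{E}[X_{(k)}]-X_{(k)})\big)\big]\le \frac{\lambda^2 v^l}{2},$$ and for all $\gamma\ge 0$, $$\mathbb{P}\Big(\mathbb{E}[X_{(k)}]-X_{(k)}\ge \sqrt{2v^l\gamma}\Big)\le e^{-\gamma}.$$
   Context: $X$ is a continuous real random variable with support $[0,\infty)$, density $f$ and c.d.f. $F$. Its hazard rate is $h(x)=f(x)/(1-F(x))$. IHR assumption: $h$ is non-decreasing on $[0,\infty)$ (i.e. $h(x_1)\ge h(x_2)$ whenever $x_1\ge x_2\ge 0$) and $L:=\inf_x h(x)>0$. For i.i.d. samples $X_1,\dots,X_n$, the order statistics $X_{(1)}\ge X_{(2)}\ge\cdots\ge X_{(n)}$ are the samples sorted in decreasing order ($X_{(1)}$ is the maximum); $X_{(k)}$ is called the rank-$k$ order statistic. *)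

theory Defs
  imports "HOL-Probability.Probability"
begin

text \<open>Rank-k order statistic (in decreasing order, rank 1 = maximum) of the
  values x 0, ..., x (n-1).\<close>
definition order_stat :: "nat \<Rightarrow> nat \<Rightarrow> (nat \<Rightarrow> real) \<Rightarrow> real" where
  "order_stat n k x = rev (sort (map x [0..<n])) ! (k - 1)"

definition cdf_of_density :: "(real \<Rightarrow> real) \<Rightarrow> real \<Rightarrow> real" where
  "cdf_of_density f x = measure (density lborel (\<lambda>t. ennreal (f t))) {..x}"

definition hazard :: "(real \<Rightarrow> real) \<Rightarrow> real \<Rightarrow> real" where
  "hazard f x = f x / (1 - cdf_of_density f x)"

end

theory Submission
  imports Defs
begin


definition Dk :: "nat \<Rightarrow> nat \<Rightarrow> real \<Rightarrow> real" where
  "Dk k n w = (if w < 0 then 0 else real k * real (n choose k) * exp (- w) ^ k * (1 - exp (- w)) ^ (n - k))"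

definition Bn :: "nat \<Rightarrow> nat \<Rightarrow> real \<Rightarrow> real" where
  "Bn n k p = (\<Sum>j<k. real (n choose j) * p ^ j * (1 - p) ^ (n - j))"

lemma deriv_exp_pow: "((\<lambda>w. exp (- w) ^ j) has_real_derivative (- real j * exp (- w) ^ j)) (at w)"
proof -
  have e: "\<And>w. exp (- w) ^ j = exp (- (real j * w))"
    by (metis exp_of_nat_mult mult_minus_right)
  show ?thesis unfolding e
    by (auto intro!: derivative_eq_intros)
qed

lemma deriv_one_minus_exp_pow:
  "((\<lambda>w. (1 - exp (- w)) ^ Suc m) has_real_derivative (real (Suc m) * (1 - exp (- w)) ^ m * exp (- w))) (at w)"
proof -
  have "((\<lambda>w. 1 - exp (- w)) has_real_derivative exp (- w)) (at w)"
    by (auto intro!: derivative_eq_intros)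
  from DERIV_power[OF this, of "Suc m"] show ?thesis by (simp add: mult_ac)
qed

lemma binom_aux: "k < n \<Longrightarrow> real (n choose k) * real (n - k) = real (Suc k) * real (n choose Suc k)"
proof -
  assume "k < n"
  then obtain n' where n: "n = Suc n'" by (cases n) auto
  have "(n - k) * (n choose k) = n * (n - 1 choose k)" by (rule binomial_absorb_comp)
  moreover have "Suc k * (Suc n' choose Suc k) = Suc n' * (n' choose k)" by (metis Suc_times_binomial_eq mult.commute)
  ultimately have "(n choose k) * (n - k) = Suc k * (n choose Suc k)" using n by (simp add: mult.commute)
  then show ?thesis by (metis of_nat_mult)
qed

lemma deriv_Bn:
  assumes "k \<le> n"
  shows "((\<lambda>w. Bn n k (exp (- w))) has_real_derivative
           (real k * real (n choose k) * exp (- w) ^ k * (1 - exp (- w)) ^ (n - k))) (at w)"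
  using assms
proof (induction k)
  case 0
  then show ?case by (simp add: Bn_def)
next
  case (Suc k)
  then have kn: "k < n" by simp
  define m where "m = n - Suc k"
  have nk: "n - k = Suc m" using kn m_def by simp
  have IH: "((\<lambda>w. Bn n k (exp (- w))) has_real_derivative
           (real k * real (n choose k) * exp (- w) ^ k * (1 - exp (- w)) ^ Suc m)) (at w)"
    using Suc kn nk by simp
  have eq: "(\<lambda>w. Bn n (Suc k) (exp (- w))) = (\<lambda>w. Bn n k (exp (- w)) + real (n choose k) * (exp (-w) ^ k * (1 - exp (-w)) ^ Suc m))"
    by (auto simp: Bn_def nk mult.assoc)
  have T: "((\<lambda>w. real (n choose k) * (exp (-w) ^ k * (1 - exp (-w)) ^ Suc m)) has_real_derivative
     real (n choose k) * ((- real k * exp (- w) ^ k) * (1 - exp (-w)) ^ Suc m + (real (Suc m) * (1 - exp (- w)) ^ m * exp (- w)) * exp (-w) ^ k)) (at w)"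
    by (intro DERIV_cmult DERIV_mult deriv_exp_pow deriv_one_minus_exp_pow)
  have "((\<lambda>w. Bn n (Suc k) (exp (- w))) has_real_derivative
     real k * real (n choose k) * exp (- w) ^ k * (1 - exp (- w)) ^ Suc m +
     real (n choose k) * ((- real k * exp (- w) ^ k) * (1 - exp (-w)) ^ Suc m + (real (Suc m) * (1 - exp (- w)) ^ m * exp (- w)) * exp (-w) ^ k)) (at w)"
    unfolding eq by (intro DERIV_add IH T)
  moreover have "real k * real (n choose k) * exp (- w) ^ k * (1 - exp (- w)) ^ Suc m +
     real (n choose k) * ((- real k * exp (- w) ^ k) * (1 - exp (-w)) ^ Suc m + (real (Suc m) * (1 - exp (- w)) ^ m * exp (- w)) * exp (-w) ^ k)
     = (real (n choose k) * real (n - k)) * exp (- w) ^ Suc k * (1 - exp (- w)) ^ m"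
    using nk by (simp add: algebra_simps)
  moreover have "n - Suc k = m" using m_def by simp
  ultimately show ?case using binom_aux[OF kn] by simp
qed


definition nu :: "nat \<Rightarrow> nat \<Rightarrow> real measure" where
  "nu k n = density lborel (\<lambda>w. ennreal (Dk k n w))"

lemma Dk_nonneg: "0 \<le> Dk k n w"
  by (auto simp: Dk_def)

lemma Dk_meas[measurable]: "Dk k n \<in> borel_measurable borel"
  unfolding Dk_def by measurable

lemma Bn_one: "k \<le> n \<Longrightarrow> Bn n k 1 = 0"
  by (auto simp: Bn_def intro!: sum.neutral)

lemma Bn_zero: "1 \<le> k \<Longrightarrow> Bn n k 0 = 1"
proof -
  assume "1 \<le> k"
  have "Bn n k 0 = (\<Sum>j\<in>{0}. real (n choose j) * 0 ^ j * (1 - 0) ^ (n - j))"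
    unfolding Bn_def using \<open>1 \<le> k\<close> by (intro sum.mono_neutral_right) auto
  then show ?thesis by simp
qed

lemma nu_cdf_int:
  assumes "k \<le> n" "0 \<le> w"
  shows "((\<lambda>x. real k * real (n choose k) * exp (- x) ^ k * (1 - exp (- x)) ^ (n - k)) has_integral
           Bn n k (exp (- w))) {0..w}"
proof -
  have "((\<lambda>x. real k * real (n choose k) * exp (- x) ^ k * (1 - exp (- x)) ^ (n - k)) has_integral
           Bn n k (exp (- w)) - Bn n k (exp (- 0))) {0..w}"
    using assms(2) deriv_Bn[OF assms(1)]
    by (intro fundamental_theorem_of_calculus)
       (auto simp: has_real_derivative_iff_has_vector_derivative[symmetric] intro: has_field_derivative_at_within)
  then show ?thesis using Bn_one[OF assms(1)] by simp
qed

lemma emeasure_nu_atMost: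
  assumes "k \<le> n" "0 \<le> w"
  shows "emeasure (nu k n) {..w} = ennreal (Bn n k (exp (- w)))"
proof -
  have "emeasure (nu k n) {..w} = (\<integral>\<^sup>+x. ennreal (Dk k n x) * indicator {..w} x \<partial>lborel)"
    unfolding nu_def by (simp add: emeasure_density)
  also have "\<dots> = (\<integral>\<^sup>+x. ennreal (indicator {0..w} x * (real k * real (n choose k) * exp (- x) ^ k * (1 - exp (- x)) ^ (n - k))) \<partial>lborel)"
    by (intro nn_integral_cong) (auto simp: Dk_def indicator_def)
  also have "\<dots> = ennreal (Bn n k (exp (- w)))"
    by (intro nn_integral_has_integral_lebesgue nu_cdf_int assms) auto
  finally show ?thesis .
qed

lemma emeasure_nu_atMost_neg:
  assumes "w < 0"
  shows "emeasure (nu k n) {..w} = 0"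
proof -
  have "emeasure (nu k n) {..w} = (\<integral>\<^sup>+x. ennreal (Dk k n x) * indicator {..w} x \<partial>lborel)"
    unfolding nu_def by (simp add: emeasure_density)
  also have "(\<lambda>x. ennreal (Dk k n x) * indicator {..w} x) = (\<lambda>x. 0)"
    using assms by (auto simp: fun_eq_iff Dk_def split: split_indicator)
  finally show ?thesis by simp
qed

lemma prob_space_nu:
  assumes "1 \<le> k" "k \<le> n"
  shows "prob_space (nu k n)"
proof
  have "(\<lambda>i. emeasure (nu k n) {..real i}) \<longlonglongrightarrow> emeasure (nu k n) (\<Union>i. {..real i})"
    by (intro Lim_emeasure_incseq) (auto simp: nu_def incseq_def)
  moreover have "(\<Union>i. {..real i}) = UNIV"
    by (auto simp: real_arch_simple)
  moreover have "(\<lambda>i. emeasure (nu k n) {..real i}) = (\<lambda>i. ennreal (Bn n k (exp (- real i))))"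
    using assms by (auto simp: emeasure_nu_atMost)
  moreover have "(\<lambda>i. ennreal (Bn n k (exp (- real i)))) \<longlonglongrightarrow> ennreal (Bn n k 0)"
  proof -
    have "(\<lambda>i. exp (- real i)) \<longlonglongrightarrow> 0"
      by real_asymp
    then have "(\<lambda>i. Bn n k (exp (- real i))) \<longlonglongrightarrow> Bn n k 0"
      unfolding Bn_def by (intro tendsto_intros)
    then show ?thesis by (intro tendsto_ennrealI)
  qed
  ultimately have "emeasure (nu k n) UNIV = ennreal (Bn n k 0)"
    using LIMSEQ_unique by metis
  then show "emeasure (nu k n) (space (nu k n)) = 1"
    using Bn_zero[OF assms(1)] by (simp add: nu_def)
qed


lemma alg1:
  fixes e :: real assumes "0 < e"
  shows "e ^ (k + Suc m) * inverse e ^ k * (1 - inverse e) ^ m = e * (e - 1) ^ m"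
proof -
  have "e ^ (k + Suc m) * inverse e ^ k = e * e ^ m"
    using assms by (simp add: power_add field_simps)
  moreover have "e ^ m * (1 - inverse e) ^ m = (e - 1) ^ m"
    using assms by (simp add: power_mult_distrib[symmetric] field_simps)
  ultimately show ?thesis by (metis mult.assoc)
qed

lemma alg2:
  fixes e :: real assumes "0 < e"
  shows "inverse e ^ (k + Suc m) * (e - 1) ^ Suc m = inverse e ^ k * (1 - inverse e) ^ Suc m"
proof -
  have "inverse e ^ (k + Suc m) = inverse e ^ k * inverse e ^ Suc m" by (simp add: power_add)
  moreover have "inverse e ^ Suc m * (e - 1) ^ Suc m = (1 - inverse e) ^ Suc m"
    using assms by (simp add: power_mult_distrib[symmetric] field_simps)
  ultimately show ?thesis by (metis mult.assoc)
qed

lemma conv_int: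
  assumes "k \<le> n" "0 \<le> x"
  defines "m \<equiv> n - k"
  shows "((\<lambda>y. real (Suc n) * exp (- (x - y) * real (Suc n)) * (real k * real (n choose k) * exp (- y) ^ k * (1 - exp (- y)) ^ (n - k)))
     has_integral (real k * real (Suc n choose k) * exp (- x) ^ k * (1 - exp (- x)) ^ (Suc n - k))) {0..x}"
proof -
  define c where "c = real (Suc n) * real k * real (n choose k) * exp (- x * real (Suc n))"
  define A where "A y = c / real (Suc m) * (exp y - 1) ^ Suc m" for y
  have nsplit: "Suc n = k + Suc m" using assms(1) m_def by simp
  have dA: "(A has_real_derivative c * ((exp y - 1) ^ m * exp y)) (at y)" for y
  proof -
    have "((\<lambda>y. exp y - 1) has_real_derivative exp y) (at y)" by (auto intro!: derivative_eq_intros)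
    from DERIV_power[OF this, of "Suc m"]
    have "((\<lambda>y. (exp y - 1) ^ Suc m) has_real_derivative real (Suc m) * ((exp y - 1) ^ m * exp y)) (at y)" by (simp add: mult_ac)
    from DERIV_cmult[OF this, of "c / real (Suc m)"] show ?thesis
      unfolding A_def by (rule DERIV_cong) simp
  qed
  have eqf: "real (Suc n) * exp (- (x - y) * real (Suc n)) * (real k * real (n choose k) * exp (- y) ^ k * (1 - exp (- y)) ^ (n - k))
     = c * ((exp y - 1) ^ m * exp y)" for y
  proof -
    have h1: "exp (- (x - y) * real (Suc n)) = exp (- x * real (Suc n)) * exp y ^ (k + Suc m)"
      using nsplit by (simp add: exp_add[symmetric] exp_of_nat2_mult[symmetric] algebra_simps)
    have h2: "exp y ^ (k + Suc m) * exp (- y) ^ k * (1 - exp (- y)) ^ m = exp y * (exp y - 1) ^ m"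
      using alg1[of "exp y" k m] by (simp add: exp_minus)
    have "real (Suc n) * exp (- (x - y) * real (Suc n)) * (real k * real (n choose k) * exp (- y) ^ k * (1 - exp (- y)) ^ m)
       = c * (exp y ^ (k + Suc m) * exp (- y) ^ k * (1 - exp (- y)) ^ m)"
      unfolding h1 c_def by (simp only: mult_ac)
    then show ?thesis unfolding m_def[symmetric] h2 by (simp only: mult_ac)
  qed
  have "((\<lambda>y. c * ((exp y - 1) ^ m * exp y)) has_integral (A x - A 0)) {0..x}"
    using assms(2) dA
    by (intro fundamental_theorem_of_calculus)
       (auto simp: has_real_derivative_iff_has_vector_derivative[symmetric] intro: has_field_derivative_at_within)
  moreover have "A x - A 0 = real k * real (Suc n choose k) * exp (- x) ^ k * (1 - exp (- x)) ^ (Suc n - k)"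
  proof -
    have b: "real (Suc m) * real (Suc n choose k) = real (Suc n) * real (n choose k)"
      using binomial_absorb_comp[of "Suc n" k] nsplit
      by (metis diff_Suc_1 add_diff_cancel_left' of_nat_mult)
    have e: "exp (- x * real (Suc n)) * (exp x - 1) ^ Suc m = exp (- x) ^ k * (1 - exp (- x)) ^ Suc m"
    proof -
      have e1: "exp (- x * real (Suc n)) = inverse (exp x) ^ (k + Suc m)"
        by (metis exp_minus exp_of_nat2_mult nsplit)
      show ?thesis unfolding e1 exp_minus using alg2[of "exp x" k m] by simp
    qed
    have "A x - A 0 = real (Suc n) * real k * real (n choose k) * (exp (- x * real (Suc n)) * (exp x - 1) ^ Suc m) / real (Suc m)"
      unfolding A_def c_def by simp
    also have "\<dots> = real k * (real (Suc m) * real (Suc n choose k)) * (exp (- x * real (Suc n)) * (exp x - 1) ^ Suc m) / real (Suc m)"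
      using b by simp
    also have "\<dots> = real k * real (Suc n choose k) * (exp (- x) ^ k * (1 - exp (- x)) ^ Suc m)"
      unfolding e by (simp add: field_simps)
    finally show ?thesis using nsplit by simp
  qed
  ultimately show ?thesis using eqf by simp
qed


abbreviation Ed :: "nat \<Rightarrow> real measure" where
  "Ed r \<equiv> density lborel (\<lambda>x. ennreal (exponential_density (real r) x))"

lemma prob_space_Ed: "0 < r \<Longrightarrow> prob_space (Ed r)"
  by (rule prob_space_exponential_density) simp

lemma nu_Suc:
  assumes "1 \<le> k" "k \<le> n"
  shows "nu k (Suc n) = (nu k n \<star> Ed (Suc n))"
proof -
  interpret N: prob_space "nu k n" by (rule prob_space_nu[OF assms])
  interpret E: prob_space "Ed (Suc n)" by (rule prob_space_Ed) simp
  have fN: "finite_measure (nu k n)" by (rule N.finite_measure_axioms)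
  have fE: "finite_measure (Ed (Suc n))" by (rule E.finite_measure_axioms)
  have "(nu k n \<star> Ed (Suc n)) = (Ed (Suc n) \<star> nu k n)"
    by (rule convolution_commutative[OF fN fE]) (simp_all add: nu_def)
  also have "\<dots> = density lborel (\<lambda>x. \<integral>\<^sup>+y. ennreal (exponential_density (real (Suc n)) (x - y)) * ennreal (Dk k n y) \<partial>lborel)"
    unfolding nu_def
    by (rule convolution_density) (use fE fN[unfolded nu_def] in auto)
  also have "\<dots> = nu k (Suc n)"
    unfolding nu_def
  proof (rule density_cong)
    show "(\<lambda>x. \<integral>\<^sup>+y. ennreal (exponential_density (real (Suc n)) (x - y)) * ennreal (Dk k n y) \<partial>lborel) \<in> borel_measurable lborel"
      by measurable
    show "(\<lambda>x. ennreal (Dk k (Suc n) x)) \<in> borel_measurable lborel" by measurable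
    show "AE x in lborel. (\<integral>\<^sup>+y. ennreal (exponential_density (real (Suc n)) (x - y)) * ennreal (Dk k n y) \<partial>lborel) = ennreal (Dk k (Suc n) x)"
    proof (rule AE_I2)
    fix x :: real
    show "(\<integral>\<^sup>+y. ennreal (exponential_density (real (Suc n)) (x - y)) * ennreal (Dk k n y) \<partial>lborel) = ennreal (Dk k (Suc n) x)"
    proof (cases "x < 0")
      case True
      have "(\<lambda>y. ennreal (exponential_density (real (Suc n)) (x - y)) * ennreal (Dk k n y)) = (\<lambda>y. 0)"
        using True by (auto simp: fun_eq_iff exponential_density_def Dk_def)
      then show ?thesis using True by (simp add: Dk_def)
    next
      case False
      have "(\<integral>\<^sup>+y. ennreal (exponential_density (real (Suc n)) (x - y)) * ennreal (Dk k n y) \<partial>lborel)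
        = (\<integral>\<^sup>+y. ennreal (indicator {0..x} y * (real (Suc n) * exp (- (x - y) * real (Suc n)) * (real k * real (n choose k) * exp (- y) ^ k * (1 - exp (- y)) ^ (n - k)))) \<partial>lborel)"
        by (intro nn_integral_cong) (auto simp: exponential_density_def Dk_def ennreal_mult'[symmetric] split: split_indicator)
      also have "\<dots> = ennreal (real k * real (Suc n choose k) * exp (- x) ^ k * (1 - exp (- x)) ^ (Suc n - k))"
        using False assms by (intro nn_integral_has_integral_lebesgue conv_int) auto
      finally show ?thesis using False by (simp add: Dk_def)
    qed
    qed
  qed
  finally show ?thesis by simp
qed

lemma nu_base:
  assumes "1 \<le> k"
  shows "nu k k = Ed k"
  unfolding nu_def
  by (intro density_cong AE_I2 refl)
     (auto simp: Dk_def exponential_density_def exp_of_nat2_mult[symmetric] mult.commute)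


lemma Ed_distributed:
  assumes "0 < r"
  shows "distributed (Ed r) lborel (\<lambda>x. x) (exponential_density (real r))"
  unfolding distributed_def by (auto simp: distr_id2)

lemma Ed_facts:
  assumes "0 < r"
  shows "integrable (Ed r) (\<lambda>x. x)" "(\<integral>x. x \<partial>Ed r) = 1 / real r"
    "integrable (Ed r) (\<lambda>x. x\<^sup>2)" "(\<integral>x. (x - 1 / real r)\<^sup>2 \<partial>Ed r) = 1 / (real r)\<^sup>2"
    "AE x in Ed r. 0 \<le> x"
proof -
  interpret prob_space "Ed r" by (rule prob_space_Ed[OF assms])
  have l: "0 < real r" using assms by simp
  note D = Ed_distributed[OF assms]
  show i1: "integrable (Ed r) (\<lambda>x. x)"
    using erlang_ith_moment_integrable[OF l D, of 1] by simp
  show e1: "(\<integral>x. x \<partial>Ed r) = 1 / real r"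
    using exponential_distributed_expectation[OF l D] by simp
  show "integrable (Ed r) (\<lambda>x. x\<^sup>2)"
    using erlang_ith_moment_integrable[OF l D, of 2] by simp
  show "(\<integral>x. (x - 1 / real r)\<^sup>2 \<partial>Ed r) = 1 / (real r)\<^sup>2"
    using exponential_distributed_variance[OF l D] e1 by simp
  show "AE x in Ed r. 0 \<le> x"
    by (subst distributed_AE2[OF D]) (auto simp: exponential_density_def)
qed

lemma quad_pos: fixes y :: real shows "0 < 1 + y + y\<^sup>2"
proof -
  have "1 + y + y\<^sup>2 = (y + 1/2)\<^sup>2 + 3/4" by (simp add: power2_eq_square field_simps)
  moreover have "0 \<le> (y + 1/2)\<^sup>2" by simp
  ultimately show ?thesis by linarith
qed

lemma exp_quad: fixes y :: real assumes "y \<le> 1" shows "exp y \<le> 1 + y + y\<^sup>2"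
proof (cases "0 \<le> y")
  case True then show ?thesis using exp_bound assms by blast
next
  case False
  have a: "1 + (-y) + (-y)\<^sup>2 / 2 \<le> exp (-y)" using False by (intro exp_lower_Taylor_quadratic) simp
  have pos: "0 < 1 + (-y) + (-y)\<^sup>2 / 2" using False by (simp add: add_pos_nonneg)
  have "1 \<le> (1 + y + y\<^sup>2) * (1 + (-y) + (-y)\<^sup>2 / 2)"
  proof -
    have "(1 + y + y\<^sup>2) * (1 + (-y) + (-y)\<^sup>2 / 2) = 1 + y\<^sup>2/2 - y^3/2 + y^4/2"
      by (simp add: field_simps power2_eq_square power3_eq_cube power4_eq_xxxx)
    moreover have "0 \<le> -(y ^ 3)" using False mult_nonneg_nonpos[of "y*y" y] by (simp add: power3_eq_cube)
    moreover have "0 \<le> y^4" by simp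
    moreover have "0 \<le> y\<^sup>2" by simp
    ultimately show ?thesis by linarith
  qed
  also have "\<dots> \<le> (1 + y + y\<^sup>2) * exp (-y)"
    using a quad_pos[of y] by (intro mult_left_mono) auto
  finally have "1 \<le> (1 + y + y\<^sup>2) * exp (-y)" .
  then show ?thesis by (simp add: exp_minus field_simps)
qed


definition lip :: "real \<Rightarrow> (real \<Rightarrow> real) \<Rightarrow> bool" where
  "lip a g \<longleftrightarrow> (\<forall>x y. \<bar>g x - g y\<bar> \<le> a * \<bar>x - y\<bar>)"

lemma lipD: "lip a g \<Longrightarrow> \<bar>g x - g y\<bar> \<le> a * \<bar>x - y\<bar>"
  by (auto simp: lip_def)

lemma integrable_lip:
  assumes "finite_measure M" "integrable M (\<lambda>x. x)" "lip a g" "0 \<le> a" "g \<in> borel_measurable M"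
  shows "integrable M g"
proof -
  interpret finite_measure M by fact
  have maj: "integrable M (\<lambda>x. \<bar>g 0\<bar> + a * \<bar>x\<bar>)"
    using assms(2) by (intro Bochner_Integration.integrable_add integrable_mult_right integrable_abs) auto
  have bd: "\<bar>g x\<bar> \<le> \<bar>g 0\<bar> + a * \<bar>x\<bar>" for x
    using lipD[OF assms(3), of x 0] by simp
  show ?thesis
    by (rule Bochner_Integration.integrable_bound[OF maj assms(5)]) (use bd assms(4) in \<open>auto intro!: AE_I2\<close>)
qed

lemma integrable_lip_sq:
  assumes "finite_measure M" "integrable M (\<lambda>x. x\<^sup>2)" "lip a g" "0 \<le> a" "g \<in> borel_measurable M"
  shows "integrable M (\<lambda>x. (g x)\<^sup>2)"
proof -
  interpret finite_measure M by fact
  have maj: "integrable M (\<lambda>x. 2 * (g 0)\<^sup>2 + 2 * a\<^sup>2 * x\<^sup>2)"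
    using assms(2) by (intro Bochner_Integration.integrable_add integrable_mult_right) auto
  have bd: "(g x)\<^sup>2 \<le> 2 * (g 0)\<^sup>2 + 2 * a\<^sup>2 * x\<^sup>2" for x
  proof -
    have "\<bar>g x\<bar> \<le> \<bar>g 0\<bar> + a * \<bar>x\<bar>"
      using lipD[OF assms(3), of x 0] by simp
    then have "\<bar>g x\<bar>\<^sup>2 \<le> (\<bar>g 0\<bar> + a * \<bar>x\<bar>)\<^sup>2" by (intro power_mono) auto
    also have "\<dots> \<le> 2 * (g 0)\<^sup>2 + 2 * a\<^sup>2 * x\<^sup>2"
      using sum_squares_bound[of "\<bar>g 0\<bar>" "a * \<bar>x\<bar>"] 
      by (simp add: power2_eq_square algebra_simps)
    finally show ?thesis by simp
  qed
  show ?thesis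
    by (rule Bochner_Integration.integrable_bound[OF maj]) (use bd assms(5) in \<open>auto intro!: AE_I2\<close>)
qed


lemma oneD:
  assumes r: "0 < r" and a: "0 \<le> a" and l: "0 \<le> l" and hmono: "mono h" and hlip: "lip a h"
  shows "(\<integral>\<^sup>+x. ennreal (exp (l * ((\<integral>t. h t \<partial>Ed r) - h x))) \<partial>Ed r) \<le> ennreal (exp ((l * a / real r)\<^sup>2))"
proof -
  interpret prob_space "Ed r" by (rule prob_space_Ed[OF r])
  note F = Ed_facts[OF r]
  have hm[measurable]: "h \<in> borel_measurable borel" using hmono by (rule borel_measurable_mono)
  have hmE: "h \<in> borel_measurable (Ed r)" by simp
  have hi: "integrable (Ed r) h"
    by (rule integrable_lip[OF finite_measure_axioms F(1) hlip a hmE])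
  have pU: "prob UNIV = 1" using prob_space by simp
  have eU: "emeasure (Ed r) UNIV = 1" using emeasure_space_1 by simp
  define m where "m = (\<integral>t. h t \<partial>Ed r)"
  define b where "b = a / real r"
  have b0: "0 \<le> b" using a by (simp add: b_def)
  have lb: "l * a / real r = l * b" by (simp add: b_def)
  have "m - h 0 = (\<integral>x. h x - h 0 \<partial>Ed r)"
    using hi by (simp add: m_def pU)
  also have "\<dots> \<le> (\<integral>x. a * x \<partial>Ed r)"
  proof (rule integral_mono_AE)
    show "integrable (Ed r) (\<lambda>x. h x - h 0)" using hi by simp
    show "integrable (Ed r) (\<lambda>x. a * x)" using F(1) by simp
    show "AE x in Ed r. h x - h 0 \<le> a * x"
      using F(5) by eventually_elim (use lipD[OF hlip] in \<open>smt (verit)\<close>)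
  qed
  also have "\<dots> = b" using F(2) by (simp add: b_def)
  finally have mb: "m - h 0 \<le> b" .
  have Vb: "AE x in Ed r. m - h x \<le> b"
    using F(5) by eventually_elim (use mb hmono[THEN monoD] in \<open>smt (verit)\<close>)
  show ?thesis
  proof (cases "1 \<le> l * b")
    case True
    have "(\<integral>\<^sup>+x. ennreal (exp (l * (m - h x))) \<partial>Ed r) \<le> (\<integral>\<^sup>+x. ennreal (exp ((l * b)\<^sup>2)) \<partial>Ed r)"
    proof (rule nn_integral_mono_AE)
      show "AE x in Ed r. ennreal (exp (l * (m - h x))) \<le> ennreal (exp ((l * b)\<^sup>2))"
        using Vb
      proof eventually_elim
        fix x assume "m - h x \<le> b"
        then have "l * (m - h x) \<le> l * b" using l by (intro mult_left_mono)
        also have "\<dots> \<le> (l * b)\<^sup>2" using True mult_left_mono[of 1 "l*b" "l*b"] by (simp add: power2_eq_square)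
        finally show "ennreal (exp (l * (m - h x))) \<le> ennreal (exp ((l * b)\<^sup>2))" by simp
      qed
    qed
    also have "\<dots> = ennreal (exp ((l * b)\<^sup>2))" by (simp add: eU)
    finally show ?thesis by (simp add: m_def lb)
  next
    case False
    have hsq: "integrable (Ed r) (\<lambda>x. (h x)\<^sup>2)"
      by (rule integrable_lip_sq[OF finite_measure_axioms F(3) hlip a hmE])
    have Vsq: "integrable (Ed r) (\<lambda>x. (m - h x)\<^sup>2)"
      using hi hsq by (simp add: power2_diff)
    have int3: "integrable (Ed r) (\<lambda>x. 1 + l * (m - h x) + (l * (m - h x))\<^sup>2)"
      using hi Vsq by (simp add: power_mult_distrib)
    have "(\<integral>\<^sup>+x. ennreal (exp (l * (m - h x))) \<partial>Ed r) \<le> (\<integral>\<^sup>+x. ennreal (1 + l * (m - h x) + (l * (m - h x))\<^sup>2) \<partial>Ed r)"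
    proof (rule nn_integral_mono_AE)
      show "AE x in Ed r. ennreal (exp (l * (m - h x))) \<le> ennreal (1 + l * (m - h x) + (l * (m - h x))\<^sup>2)"
        using Vb
      proof eventually_elim
        fix x assume "m - h x \<le> b"
        then have "l * (m - h x) \<le> l * b" using l by (intro mult_left_mono)
        then have "l * (m - h x) \<le> 1" using False by simp
        then show "ennreal (exp (l * (m - h x))) \<le> ennreal (1 + l * (m - h x) + (l * (m - h x))\<^sup>2)"
          by (intro ennreal_leI exp_quad)
      qed
    qed
    also have "\<dots> = ennreal (\<integral>x. 1 + l * (m - h x) + (l * (m - h x))\<^sup>2 \<partial>Ed r)"
      using int3 by (intro nn_integral_eq_integral) (auto intro!: AE_I2 less_imp_le[OF quad_pos])
    also have "(\<integral>x. 1 + l * (m - h x) + (l * (m - h x))\<^sup>2 \<partial>Ed r) = 1 + l\<^sup>2 * (\<integral>x. (m - h x)\<^sup>2 \<partial>Ed r)"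
    proof -
      have "(\<integral>x. 1 + l * (m - h x) + (l * (m - h x))\<^sup>2 \<partial>Ed r)
          = (\<integral>x. 1 + l * (m - h x) \<partial>Ed r) + (\<integral>x. l\<^sup>2 * (m - h x)\<^sup>2 \<partial>Ed r)"
        using hi Vsq by (subst Bochner_Integration.integral_add) (auto simp: power_mult_distrib)
      also have "(\<integral>x. 1 + l * (m - h x) \<partial>Ed r) = 1"
        using hi by (simp add: pU m_def)
      finally show ?thesis by simp
    qed
    also have "(\<integral>x. (m - h x)\<^sup>2 \<partial>Ed r) \<le> b\<^sup>2"
    proof -
      define c where "c = 1 / real r"
      have "(\<integral>x. (h x - h c)\<^sup>2 \<partial>Ed r) = (\<integral>x. (m - h x)\<^sup>2 + 2 * (m - h c) * (h x - m) + (m - h c)\<^sup>2 \<partial>Ed r)"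
        by (intro Bochner_Integration.integral_cong refl) (simp add: power2_eq_square algebra_simps)
      also have "\<dots> = (\<integral>x. (m - h x)\<^sup>2 \<partial>Ed r) + 2 * (m - h c) * (\<integral>x. h x - m \<partial>Ed r) + (m - h c)\<^sup>2"
        using Vsq hi by (simp add: pU)
      also have "(\<integral>x. h x - m \<partial>Ed r) = 0"
        using hi by (simp add: pU m_def)
      finally have eq: "(\<integral>x. (h x - h c)\<^sup>2 \<partial>Ed r) = (\<integral>x. (m - h x)\<^sup>2 \<partial>Ed r) + (m - h c)\<^sup>2" by simp
      have "(\<integral>x. (h x - h c)\<^sup>2 \<partial>Ed r) \<le> (\<integral>x. a\<^sup>2 * (x - c)\<^sup>2 \<partial>Ed r)"
      proof (rule integral_mono)
        show "integrable (Ed r) (\<lambda>x. (h x - h c)\<^sup>2)" using hi hsq by (simp add: power2_diff)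
        show "integrable (Ed r) (\<lambda>x. a\<^sup>2 * (x - c)\<^sup>2)" using F(1) F(3) by (simp add: power2_diff)
        fix x
        have "\<bar>h x - h c\<bar>\<^sup>2 \<le> (a * \<bar>x - c\<bar>)\<^sup>2" using lipD[OF hlip, of x c] by (intro power_mono) auto
        then show "(h x - h c)\<^sup>2 \<le> a\<^sup>2 * (x - c)\<^sup>2" by (simp add: power_mult_distrib)
      qed
      also have "\<dots> = a\<^sup>2 * (1 / (real r)\<^sup>2)"
        using F(4) by (simp add: c_def)
      also have "\<dots> = b\<^sup>2" by (simp add: b_def power_divide)
      finally show ?thesis using eq by (smt (verit) zero_le_power2)
    qed
    then have "ennreal (1 + l\<^sup>2 * (\<integral>x. (m - h x)\<^sup>2 \<partial>Ed r)) \<le> ennreal (1 + (l * b)\<^sup>2)"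
      by (intro ennreal_leI) (simp add: power_mult_distrib mult_left_mono)
    also have "\<dots> \<le> ennreal (exp ((l * b)\<^sup>2))"
      by (intro ennreal_leI) (rule exp_ge_add_one_self)
    finally show ?thesis by (simp add: m_def lb)
  qed
qed


lemma integrable_nu_x:
  assumes "1 \<le> k" "k \<le> n"
  shows "integrable (nu k n) (\<lambda>x. x)"
proof -
  define c where "c = real k * real (n choose k)"
  have c0: "0 \<le> c" by (simp add: c_def)
  have ie: "integrable lborel (\<lambda>x. erlang_density 0 1 x * x ^ 1)"
  proof (rule integrableI_nonneg)
    show "(\<lambda>x. erlang_density 0 1 x * x ^ 1) \<in> borel_measurable lborel" by measurable
    show "AE x in lborel. 0 \<le> erlang_density 0 1 x * x ^ 1"
      by (auto intro!: AE_I2 simp: erlang_density_def)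
    show "(\<integral>\<^sup>+ x. ennreal (erlang_density 0 1 x * x ^ 1) \<partial>lborel) < \<infinity>"
      by (subst nn_integral_erlang_ith_moment) auto
  qed
  have maj: "integrable lborel (\<lambda>x. c * (exponential_density 1 x * x))"
    using ie by simp
  have bd: "norm (Dk k n x *\<^sub>R x) \<le> norm (c * (exponential_density 1 x * x))" for x
  proof (cases "x < 0")
    case True then show ?thesis by (simp add: Dk_def)
  next
    case False
    have "exp (- x) ^ k \<le> exp (- x)"
      using assms(1) False by (intro power_le_one power_decreasing[of 1 k "exp (-x)", simplified]) auto
    moreover have "(1 - exp (- x)) ^ (n - k) \<le> 1" using False by (intro power_le_one) auto
    moreover have "0 \<le> (1 - exp (- x)) ^ (n - k)" using False by simp
    ultimately have "exp (- x) ^ k * (1 - exp (- x)) ^ (n - k) \<le> exp (- x)"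
      by (meson exp_ge_zero mult_right_le_one_le order_trans zero_le_power)
    then have "Dk k n x \<le> c * exp (- x)"
      using False c0 by (simp add: Dk_def c_def mult.assoc mult_left_mono)
    then have "Dk k n x * x \<le> c * exp (- x) * x"
      using False by (intro mult_right_mono) auto
    then show ?thesis using False Dk_nonneg[of k n x] c0
      by (simp add: exponential_density_def abs_mult)
  qed
  have "integrable lborel (\<lambda>x. Dk k n x *\<^sub>R x)"
    by (rule Bochner_Integration.integrable_bound[OF maj]) (use bd in auto)
  then show ?thesis
    unfolding nu_def by (subst integrable_density) (auto simp: Dk_nonneg)
qed


lemma lip_shift: "lip a f \<Longrightarrow> lip a (\<lambda>y. f (x + y))"
  unfolding lip_def by (metis add_diff_cancel_left)

lemma conv_integral:
  assumes PM: "prob_space M" and sM[measurable_cong]: "sets M = sets borel" and iM: "integrable M (\<lambda>x. x)"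
      and PN: "prob_space N" and sN[measurable_cong]: "sets N = sets borel" and iN: "integrable N (\<lambda>x. x)"
      and fm[measurable]: "f \<in> borel_measurable borel" and fl: "lip a f" and a: "0 \<le> a"
  shows "(\<integral>w. f w \<partial>(M \<star> N)) = (\<integral>x. \<integral>y. f (x + y) \<partial>N \<partial>M)"
proof -
  interpret M: prob_space M by fact
  interpret N: prob_space N by fact
  interpret P: pair_sigma_finite M N
    by (simp add: M.sigma_finite_measure_axioms N.sigma_finite_measure_axioms pair_sigma_finite.intro)
  have e1: "(\<integral>w. f w \<partial>(M \<star> N)) = (\<integral>z. f (fst z + snd z) \<partial>(M \<Otimes>\<^sub>M N))"
    unfolding convolution_def by (subst integral_distr) (auto simp: case_prod_beta')
  have intN: "integrable N (\<lambda>y. f (x + y))" for x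
    by (rule integrable_lip[OF N.finite_measure_axioms iN lip_shift[OF fl] a]) simp
  have iNa: "integrable N (\<lambda>y. \<bar>y\<bar>)" using iN by (rule integrable_abs)
  have inner_bd: "(\<integral>y. norm (f (x + y)) \<partial>N) \<le> \<bar>f 0\<bar> + a * \<bar>x\<bar> + a * (\<integral>y. \<bar>y\<bar> \<partial>N)" for x
  proof -
    have "(\<integral>y. norm (f (x + y)) \<partial>N) \<le> (\<integral>y. \<bar>f 0\<bar> + a * \<bar>x\<bar> + a * \<bar>y\<bar> \<partial>N)"
    proof (rule integral_mono)
      show "integrable N (\<lambda>y. norm (f (x + y)))" using intN by (rule integrable_norm)
      show "integrable N (\<lambda>y. \<bar>f 0\<bar> + a * \<bar>x\<bar> + a * \<bar>y\<bar>)" using iNa by simp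
      fix y
      have "\<bar>f (x + y) - f 0\<bar> \<le> a * \<bar>x + y\<bar>" using lipD[OF fl, of "x + y" 0] by simp
      moreover have "a * \<bar>x + y\<bar> \<le> a * \<bar>x\<bar> + a * \<bar>y\<bar>"
        using a abs_triangle_ineq[of x y] by (metis distrib_left mult_left_mono)
      ultimately show "norm (f (x + y)) \<le> \<bar>f 0\<bar> + a * \<bar>x\<bar> + a * \<bar>y\<bar>" by simp
    qed
    also have "\<dots> = \<bar>f 0\<bar> + a * \<bar>x\<bar> + a * (\<integral>y. \<bar>y\<bar> \<partial>N)"
      using iNa by (simp add: N.prob_space)
    finally show ?thesis .
  qed
  have int2: "integrable (M \<Otimes>\<^sub>M N) (\<lambda>z. f (fst z + snd z))"
  proof (rule P.Fubini_integrable)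
    show "(\<lambda>z. f (fst z + snd z)) \<in> borel_measurable (M \<Otimes>\<^sub>M N)" by measurable
    show "AE x in M. integrable N (\<lambda>y. f (fst (x, y) + snd (x, y)))" using intN by simp
    have maj: "integrable M (\<lambda>x. \<bar>f 0\<bar> + a * \<bar>x\<bar> + a * (\<integral>y. \<bar>y\<bar> \<partial>N))"
      using iM by (intro Bochner_Integration.integrable_add integrable_mult_right integrable_abs) auto
    show "integrable M (\<lambda>x. \<integral>y. norm (f (fst (x, y) + snd (x, y))) \<partial>N)"
    proof (rule Bochner_Integration.integrable_bound[OF maj])
      show "(\<lambda>x. \<integral>y. norm (f (fst (x, y) + snd (x, y))) \<partial>N) \<in> borel_measurable M" by measurable
      show "AE x in M. norm (\<integral>y. norm (f (fst (x, y) + snd (x, y))) \<partial>N) \<le> norm (\<bar>f 0\<bar> + a * \<bar>x\<bar> + a * (\<integral>y. \<bar>y\<bar> \<partial>N))"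
      proof (rule AE_I2)
        fix x
        have "0 \<le> (\<integral>y. norm (f (x + y)) \<partial>N)" by simp
        moreover have "0 \<le> (\<integral>y. \<bar>y\<bar> \<partial>N)" by simp
        ultimately show "norm (\<integral>y. norm (f (fst (x, y) + snd (x, y))) \<partial>N) \<le> norm (\<bar>f 0\<bar> + a * \<bar>x\<bar> + a * (\<integral>y. \<bar>y\<bar> \<partial>N))"
          using inner_bd[of x] a by simp
      qed
    qed
  qed
  have "(\<integral>x. \<integral>y. (\<lambda>z. f (fst z + snd z)) (x, y) \<partial>N \<partial>M) = (\<integral>z. f (fst z + snd z) \<partial>(M \<Otimes>\<^sub>M N))"
    by (rule P.integral_fst'[OF int2])
  then show ?thesis using e1 by simp
qed


lemma sets_nu[measurable_cong, simp]: "sets (nu k n) = sets borel"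
  by (simp add: nu_def)

lemma lemmaR:
  assumes k: "1 \<le> k" "k \<le> n" and a: "0 \<le> a" and l: "0 \<le> l"
  shows "mono g \<Longrightarrow> lip a g \<Longrightarrow>
    (\<integral>\<^sup>+w. ennreal (exp (l * ((\<integral>t. g t \<partial>nu k n) - g w))) \<partial>nu k n)
      \<le> ennreal (exp (l\<^sup>2 * a\<^sup>2 * (\<Sum>j=k..n. 1 / (real j)\<^sup>2)))"
  using k(2)
proof (induction n arbitrary: g rule: nat_induct_at_least)
  case base
  have "(\<integral>\<^sup>+w. ennreal (exp (l * ((\<integral>t. g t \<partial>nu k k) - g w))) \<partial>nu k k) \<le> ennreal (exp ((l * a / real k)\<^sup>2))"
    unfolding nu_base[OF k(1)] using k(1) by (intro oneD a l base) auto
  also have "(l * a / real k)\<^sup>2 = l\<^sup>2 * a\<^sup>2 * (\<Sum>j=k..k. 1 / (real j)\<^sup>2)"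
    by (simp add: power_mult_distrib power_divide)
  finally show ?case .
next
  case (Suc n)
  note gmono = Suc.prems(1) and glip = Suc.prems(2)
  have kn: "k \<le> n" by fact
  define E where "E = Ed (Suc n)"
  define \<nu> where "\<nu> = nu k n"
  interpret E: prob_space E unfolding E_def by (rule prob_space_Ed) simp
  interpret V: prob_space \<nu> unfolding \<nu>_def by (rule prob_space_nu[OF k(1) kn])
  have sE[measurable_cong, simp]: "sets E = sets borel" by (simp add: E_def)
  have sV[measurable_cong, simp]: "sets \<nu> = sets borel" by (simp add: \<nu>_def)
  have iE: "integrable E (\<lambda>x. x)" unfolding E_def by (rule Ed_facts) simp
  have iV: "integrable \<nu> (\<lambda>x. x)" unfolding \<nu>_def by (rule integrable_nu_x[OF k(1) kn])
  have gm[measurable]: "g \<in> borel_measurable borel" using gmono by (rule borel_measurable_mono)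
  have conv: "nu k (Suc n) = (\<nu> \<star> E)" unfolding E_def \<nu>_def by (rule nu_Suc[OF k(1) kn])
  define gt where "gt b = (\<integral>t. g (b + t) \<partial>E)" for b
  have intg: "integrable E (\<lambda>t. g (b + t))" for b
    by (rule integrable_lip[OF E.finite_measure_axioms iE lip_shift[OF glip] a]) simp
  have gt_mono: "mono gt"
  proof (rule monoI)
    fix x y :: real assume "x \<le> y"
    then show "gt x \<le> gt y" unfolding gt_def
      by (intro integral_mono intg) (auto intro: monoD[OF gmono])
  qed
  have gtm[measurable]: "gt \<in> borel_measurable borel" using gt_mono by (rule borel_measurable_mono)
  have gt_lip: "lip a gt"
    unfolding lip_def
  proof (intro allI)
    fix x y
    have "\<bar>gt x - gt y\<bar> = \<bar>\<integral>t. g (x + t) - g (y + t) \<partial>E\<bar>"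
      unfolding gt_def using intg by simp
    also have "\<dots> \<le> (\<integral>t. \<bar>g (x + t) - g (y + t)\<bar> \<partial>E)"
      by (rule integral_abs_bound)
    also have "\<dots> \<le> (\<integral>t. a * \<bar>x - y\<bar> \<partial>E)"
      using intg by (intro integral_mono) (auto intro: lipD[OF glip, THEN order_trans])
    also have "\<dots> = a * \<bar>x - y\<bar>" using E.prob_space by simp
    finally show "\<bar>gt x - gt y\<bar> \<le> a * \<bar>x - y\<bar>" .
  qed
  have c_eq: "(\<integral>t. g t \<partial>nu k (Suc n)) = (\<integral>b. gt b \<partial>\<nu>)"
    unfolding conv gt_def
    by (rule conv_integral[OF V.prob_space_axioms sV iV E.prob_space_axioms sE iE gm glip a])
  define c where "c = (\<integral>b. gt b \<partial>\<nu>)"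
  define K where "K = exp ((l * a / real (Suc n))\<^sup>2)"
  have inner: "(\<integral>\<^sup>+t. ennreal (exp (l * (c - g (b + t)))) \<partial>E) \<le> ennreal (exp (l * (c - gt b))) * ennreal K" for b
  proof -
    have "(\<integral>\<^sup>+t. ennreal (exp (l * (c - g (b + t)))) \<partial>E)
        = (\<integral>\<^sup>+t. ennreal (exp (l * (c - gt b))) * ennreal (exp (l * (gt b - g (b + t)))) \<partial>E)"
      by (intro nn_integral_cong) (simp add: ennreal_mult'[symmetric] exp_add[symmetric] algebra_simps)
    also have "\<dots> = ennreal (exp (l * (c - gt b))) * (\<integral>\<^sup>+t. ennreal (exp (l * (gt b - g (b + t)))) \<partial>E)"
      by (rule nn_integral_cmult) simp
    also have "\<dots> \<le> ennreal (exp (l * (c - gt b))) * ennreal K"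
    proof (intro mult_left_mono)
      have "mono (\<lambda>t. g (b + t))" using gmono by (auto simp: mono_def)
      then show "(\<integral>\<^sup>+t. ennreal (exp (l * (gt b - g (b + t)))) \<partial>E) \<le> ennreal K"
        unfolding gt_def K_def E_def using oneD[of "Suc n" a l "\<lambda>t. g (b + t)"] lip_shift[OF glip] a l
        by simp
    qed simp
    finally show ?thesis .
  qed
  have "(\<integral>\<^sup>+w. ennreal (exp (l * (c - g w))) \<partial>nu k (Suc n))
      = (\<integral>\<^sup>+b. \<integral>\<^sup>+t. ennreal (exp (l * (c - g (b + t)))) \<partial>E \<partial>\<nu>)"
    unfolding conv
    by (rule nn_integral_convolution) (auto simp: V.finite_measure_axioms E.finite_measure_axioms)
  also have "\<dots> \<le> (\<integral>\<^sup>+b. ennreal (exp (l * (c - gt b))) * ennreal K \<partial>\<nu>)"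
    by (intro nn_integral_mono inner)
  also have "\<dots> = (\<integral>\<^sup>+b. ennreal (exp (l * (c - gt b))) \<partial>\<nu>) * ennreal K"
    by (rule nn_integral_multc) (use gtm in measurable)
  also have "\<dots> \<le> ennreal (exp (l\<^sup>2 * a\<^sup>2 * (\<Sum>j=k..n. 1 / (real j)\<^sup>2))) * ennreal K"
    using Suc.IH[OF gt_mono gt_lip] unfolding c_def \<nu>_def by (intro mult_right_mono) auto
  also have "\<dots> = ennreal (exp (l\<^sup>2 * a\<^sup>2 * (\<Sum>j=k..Suc n. 1 / (real j)\<^sup>2)))"
  proof -
    have "(\<Sum>j=k..Suc n. 1 / (real j)\<^sup>2) = (\<Sum>j=k..n. 1 / (real j)\<^sup>2) + 1 / (real (Suc n))\<^sup>2"
      using kn by (simp add: sum.cl_ivl_Suc)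
    then show ?thesis
      by (simp add: K_def ennreal_mult'[symmetric] exp_add[symmetric] power_mult_distrib power_divide algebra_simps)
  qed
  finally show ?case unfolding c_def c_eq[symmetric] .
qed


locale hz =
  fixes f :: "real \<Rightarrow> real" and L :: real
  assumes f_meas[measurable]: "f \<in> borel_measurable borel"
    and f_nonneg: "\<And>x. 0 \<le> f x"
    and f_supp: "\<And>x. x < 0 \<Longrightarrow> f x = 0"
    and f_prob: "prob_space (density lborel (\<lambda>t. ennreal (f t)))"
    and L_le: "\<And>x. 0 \<le> x \<Longrightarrow> L \<le> hazard f x"
    and L_pos: "0 < L"
begin

abbreviation "Fm \<equiv> density lborel (\<lambda>t. ennreal (f t))"

definition G :: "real \<Rightarrow> real" where "G z = 1 - cdf_of_density f z"

sublocale F: prob_space Fm by (rule f_prob)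

lemma sets_Fm[simp, measurable_cong]: "sets Fm = sets borel" by simp

lemma G_eq: "G z = measure Fm {z<..}"
proof -
  have "measure Fm {z<..} = measure Fm (space Fm - {..z})"
    by (intro arg_cong[where f="measure Fm"]) auto
  also have "\<dots> = 1 - measure Fm {..z}" by (subst F.prob_compl) auto
  finally show ?thesis by (simp add: G_def cdf_of_density_def)
qed

lemma G_nonneg: "0 \<le> G z" by (simp add: G_eq)
lemma G_le1: "G z \<le> 1" by (simp add: G_eq)

lemma G_antimono: "x \<le> y \<Longrightarrow> G y \<le> G x"
  unfolding G_eq by (intro F.finite_measure_mono) auto

lemma G_nonpos: assumes "z \<le> 0" shows "G z = 1"
proof -
  have "emeasure Fm {..z} = (\<integral>\<^sup>+x. ennreal (f x) * indicator {..z} x \<partial>lborel)"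
    by (simp add: emeasure_density)
  also have "\<dots> = 0"
  proof (subst nn_integral_0_iff_AE)
    show "AE x in lborel. ennreal (f x) * indicator {..z} x = 0"
      using AE_lborel_singleton[of 0]
      by eventually_elim (use assms f_supp in \<open>auto split: split_indicator\<close>)
  qed measurable
  finally have "measure Fm {..z} = 0" by (simp add: measure_def)
  then show ?thesis by (simp add: G_def cdf_of_density_def)
qed

lemma hazard_nonneg: "0 \<le> hazard f x"
proof -
  have "cdf_of_density f x \<le> 1" unfolding cdf_of_density_def by simp
  then show ?thesis unfolding hazard_def using f_nonneg[of x] by simp
qed

lemma G_pos: assumes "0 \<le> z" shows "0 < G z"
proof (rule ccontr)
  assume "\<not> 0 < G z"
  then have "G z = 0" using G_nonneg[of z] by simp
  then have "hazard f z = 0" by (simp add: hazard_def G_def)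
  then show False using L_le[OF assms] L_pos by simp
qed

lemma f_ge: assumes "0 \<le> z" shows "L * G z \<le> f z"
proof -
  have "L \<le> f z / G z" using L_le[OF assms] by (simp add: hazard_def G_def)
  then show ?thesis using G_pos[OF assms] by (simp add: field_simps)
qed

lemma G_step: assumes "0 \<le> a" "a \<le> b" shows "G b * (1 + L * (b - a)) \<le> G a"
proof -
  have "ennreal (L * G b * (b - a)) = (\<integral>\<^sup>+x. ennreal (L * G b) * indicator {a<..b} x \<partial>lborel)"
    using assms L_pos G_nonneg[of b] by (simp add: nn_integral_cmult ennreal_mult')
  also have "\<dots> \<le> (\<integral>\<^sup>+x. ennreal (f x) * indicator {a<..b} x \<partial>lborel)"
  proof (intro nn_integral_mono)
    fix x
    show "ennreal (L * G b) * indicator {a<..b} x \<le> ennreal (f x) * indicator {a<..b} x"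
    proof (cases "x \<in> {a<..b}")
      case True
      then have "L * G b \<le> L * G x" using L_pos by (intro mult_left_mono G_antimono) auto
      also have "\<dots> \<le> f x" using True assms by (intro f_ge) auto
      finally show ?thesis using True by (simp add: ennreal_leI)
    qed simp
  qed
  also have "\<dots> = emeasure Fm {a<..b}" by (simp add: emeasure_density)
  finally have "L * G b * (b - a) \<le> measure Fm {a<..b}"
    by (simp add: F.emeasure_eq_measure)
  also have "measure Fm {a<..b} = G a - G b"
  proof -
    have "{a<..b} = {a<..} - {b<..}" using assms by auto
    then show ?thesis unfolding G_eq using assms by (simp only:) (subst F.finite_measure_Diff, auto)
  qed
  finally show ?thesis by (simp add: algebra_simps)
qed

lemma G_iter:
  assumes "0 \<le> a" "0 \<le> d"
  shows "G (a + real j * d) * (1 + L * d) ^ j \<le> G a"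
proof (induction j)
  case 0 then show ?case by simp
next
  case (Suc j)
  have "G (a + real (Suc j) * d) * (1 + L * d) \<le> G (a + real j * d)"
    using G_step[of "a + real j * d" "a + real (Suc j) * d"] assms
    by (simp add: algebra_simps)
  then have "G (a + real (Suc j) * d) * (1 + L * d) ^ Suc j \<le> G (a + real j * d) * (1 + L * d) ^ j"
    using L_pos assms by (simp add: mult.assoc[symmetric] mult_right_mono)
  then show ?case using Suc.IH by linarith
qed

lemma G_exp: assumes "0 \<le> a" "a \<le> b" shows "G b * exp (L * (b - a)) \<le> G a"
proof -
  have lim: "(\<lambda>m. G b * (1 + L * (b - a) / real m) ^ m) \<longlonglongrightarrow> G b * exp (L * (b - a))"
    by (intro tendsto_intros tendsto_exp_limit_sequentially)
  have "G b * (1 + L * (b - a) / real m) ^ m \<le> G a" for m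
  proof (cases "m = 0")
    case True then show ?thesis using G_antimono[OF assms(2)] by simp
  next
    case False
    have "G (a + real m * ((b - a) / real m)) * (1 + L * ((b - a) / real m)) ^ m \<le> G a"
      using assms by (intro G_iter) auto
    then show ?thesis using False by simp
  qed
  then show ?thesis by (intro LIMSEQ_le_const2[OF lim]) auto
qed

end


context hz begin

definition psi :: "real \<Rightarrow> real" where "psi w = Inf {z. 0 \<le> z \<and> G z \<le> exp (- w)}"

lemma G_exp0: assumes "0 \<le> z" shows "G z \<le> exp (- (L * z))"
proof -
  have "G z * exp (L * z) \<le> 1" using G_exp[of 0 z] assms G_nonpos[of 0] by simp
  then show ?thesis by (simp add: exp_minus field_simps)
qed

lemma S_ne: "{z. 0 \<le> z \<and> G z \<le> exp (- w)} \<noteq> {}"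
proof -
  define z0 where "z0 = max 0 (w / L)"
  have "0 \<le> z0" by (simp add: z0_def)
  moreover have "w \<le> L * z0" using L_pos by (simp add: z0_def field_simps max_def)
  then have "G z0 \<le> exp (- w)" using G_exp0[OF \<open>0 \<le> z0\<close>] by (smt (verit) exp_le_cancel_iff)
  ultimately show ?thesis by auto
qed

lemma S_bdd: "bdd_below {z. 0 \<le> z \<and> G z \<le> exp (- w)}"
  by (auto intro: bdd_belowI[where m=0])

lemma psi_nonneg: "0 \<le> psi w"
  unfolding psi_def using S_ne by (intro cInf_greatest) auto

lemma real_distribution_Fm: "real_distribution Fm"
  unfolding real_distribution_def real_distribution_axioms_def using f_prob by simp

lemma G_cdf: "G z = 1 - cdf Fm z"
  by (simp add: G_def cdf_of_density_def cdf_def)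

lemma G_right_cont: "continuous (at_right a) G"
proof -
  interpret real_distribution Fm by (rule real_distribution_Fm)
  have "continuous (at_right a) (\<lambda>z. 1 - cdf Fm z)"
    by (intro continuous_intros cdf_is_right_cont)
  then show ?thesis unfolding G_cdf[abs_def] .
qed

lemma psi_attained: "G (psi w) \<le> exp (- w)"
proof (rule ccontr)
  define p where "p = psi w"
  assume "\<not> G (psi w) \<le> exp (- w)"
  then have gt: "exp (- w) < G p" by (simp add: p_def)
  have "((\<lambda>z. G z) \<longlongrightarrow> G p) (at_right p)"
    using G_right_cont[of p] by (simp add: continuous_within)
  then have "eventually (\<lambda>z. exp (- w) < G z) (at_right p)"
    using gt by (rule order_tendstoD(1))
  then obtain b where b: "b > p" "\<And>y. p < y \<Longrightarrow> y < b \<Longrightarrow> exp (- w) < G y"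
    by (auto simp: eventually_at_right_field)
  have "b \<le> psi w"
    unfolding psi_def
  proof (rule cInf_greatest[OF S_ne])
    fix z assume z: "z \<in> {z. 0 \<le> z \<and> G z \<le> exp (- w)}"
    show "b \<le> z"
    proof (rule ccontr)
      assume "\<not> b \<le> z"
      then have "z < b" by simp
      show False
      proof (cases "z \<le> p")
        case True
        then have "G p \<le> G z" by (rule G_antimono)
        then show False using z gt by simp
      next
        case False
        then show False using b(2)[of z] \<open>z < b\<close> z by simp
      qed
    qed
  qed
  then show False using b(1) by (simp add: p_def)
qed

lemma psi_le_iff: assumes "0 \<le> z" shows "psi w \<le> z \<longleftrightarrow> G z \<le> exp (- w)"
proof
  assume "psi w \<le> z"
  then have "G z \<le> G (psi w)" by (rule G_antimono)
  then show "G z \<le> exp (- w)" using psi_attained[of w] by simp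
next
  assume "G z \<le> exp (- w)"
  then show "psi w \<le> z" unfolding psi_def using assms by (intro cInf_lower S_bdd) auto
qed

lemma psi_mono: "mono psi"
proof (rule monoI)
  fix x y :: real assume "x \<le> y"
  have "G (psi y) \<le> exp (- x)" using psi_attained[of y] \<open>x \<le> y\<close> by (smt (verit) exp_le_cancel_iff)
  then show "psi x \<le> psi y" using psi_le_iff[OF psi_nonneg] by simp
qed

lemma psi_step: assumes "x \<le> y" shows "psi y \<le> psi x + (y - x) / L"
proof -
  define z where "z = psi x + (y - x) / L"
  have z0: "0 \<le> z" using psi_nonneg[of x] assms L_pos by (simp add: z_def)
  have "G z * exp (L * (z - psi x)) \<le> G (psi x)"
    using psi_nonneg[of x] assms L_pos by (intro G_exp) (auto simp: z_def)
  moreover have "L * (z - psi x) = y - x" using L_pos by (simp add: z_def)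
  ultimately have "G z * exp (y - x) \<le> exp (- x)" using psi_attained[of x] by simp
  then have "G z \<le> exp (- y)" by (simp add: exp_diff exp_minus field_simps)
  then show ?thesis using psi_le_iff[OF z0] by (simp add: z_def)
qed

lemma psi_lip: "lip (1 / L) psi"
  unfolding lip_def
proof (intro allI)
  fix x y :: real
  show "\<bar>psi x - psi y\<bar> \<le> 1 / L * \<bar>x - y\<bar>"
  proof (cases "x \<le> y")
    case True
    then show ?thesis using psi_step[OF True] monoD[OF psi_mono True] by (simp add: abs_if)
  next
    case False
    then have "y \<le> x" by simp
    then show ?thesis using psi_step[OF \<open>y \<le> x\<close>] monoD[OF psi_mono \<open>y \<le> x\<close>] by (simp add: abs_if)
  qed
qed

lemma psi_set: assumes "0 \<le> z" shows "{w. psi w \<le> z} = {..- ln (G z)}"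
proof -
  have "psi w \<le> z \<longleftrightarrow> w \<le> - ln (G z)" for w
  proof -
    have "psi w \<le> z \<longleftrightarrow> G z \<le> exp (- w)" by (rule psi_le_iff[OF assms])
    also have "\<dots> \<longleftrightarrow> ln (G z) \<le> - w" using G_pos[OF assms] by (metis exp_le_cancel_iff exp_ln)
    finally show ?thesis by linarith
  qed
  then show ?thesis by auto
qed

end


lemma sorted_le_count:
  fixes S :: "real list"
  assumes "sorted S" "p < length S"
  shows "S ! p \<le> z \<longleftrightarrow> p < length (filter (\<lambda>v. v \<le> z) S)"
proof -
  have c: "length (filter (\<lambda>v. v \<le> z) S) = card {q. q < length S \<and> S ! q \<le> z}"
    by (rule length_filter_conv_card)
  show ?thesis
  proof
    assume le: "S ! p \<le> z"
    have "{..p} \<subseteq> {q. q < length S \<and> S ! q \<le> z}"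
      using assms le by (auto intro: order_trans[OF sorted_nth_mono[OF assms(1)]])
    then have "card {..p} \<le> card {q. q < length S \<and> S ! q \<le> z}" by (intro card_mono) auto
    then show "p < length (filter (\<lambda>v. v \<le> z) S)" using c by simp
  next
    assume lt: "p < length (filter (\<lambda>v. v \<le> z) S)"
    show "S ! p \<le> z"
    proof (rule ccontr)
      assume "\<not> S ! p \<le> z"
      then have "{q. q < length S \<and> S ! q \<le> z} \<subseteq> {..<p}"
        using sorted_nth_mono[OF assms(1), of p] by (force simp: not_le)
      then have "card {q. q < length S \<and> S ! q \<le> z} \<le> card {..<p}" by (intro card_mono) auto
      then show False using lt c by simp
    qed
  qed
qed

lemma count_map_upt:
  "length (filter P (map x [0..<n])) = card {i. i < n \<and> P (x i)}"
  by (simp add: length_filter_conv_card) (intro arg_cong[where f=card] Collect_cong, auto)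

lemma order_stat_le_iff:
  assumes "1 \<le> k" "k \<le> n"
  shows "order_stat n k x \<le> z \<longleftrightarrow> card {i\<in>{..<n}. z < x i} < k"
proof -
  define S where "S = sort (map x [0..<n])"
  have lS: "length S = n" by (simp add: S_def)
  have sS: "sorted S" by (simp add: S_def)
  have os: "order_stat n k x = S ! (n - k)"
    unfolding order_stat_def S_def[symmetric] using assms lS
    by (simp add: rev_nth)
  have "length (filter (\<lambda>v. v \<le> z) S) = length (filter (\<lambda>v. v \<le> z) (map x [0..<n]))"
  proof -
    have "mset (filter (\<lambda>v. v \<le> z) S) = mset (filter (\<lambda>v. v \<le> z) (map x [0..<n]))"
      by (simp add: S_def)
    then show ?thesis by (metis size_mset)
  qed
  also have "\<dots> = card {i. i < n \<and> x i \<le> z}" by (rule count_map_upt)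
  finally have c1: "length (filter (\<lambda>v. v \<le> z) S) = card {i. i < n \<and> x i \<le> z}" .
  have c2: "card {i. i < n \<and> x i \<le> z} + card {i\<in>{..<n}. z < x i} = n"
  proof -
    have "card ({i. i < n \<and> x i \<le> z} \<union> {i\<in>{..<n}. z < x i}) = card {i. i < n \<and> x i \<le> z} + card {i\<in>{..<n}. z < x i}"
      by (intro card_Un_disjoint) auto
    moreover have "{i. i < n \<and> x i \<le> z} \<union> {i\<in>{..<n}. z < x i} = {..<n}" by auto
    ultimately show ?thesis by simp
  qed
  have "order_stat n k x \<le> z \<longleftrightarrow> n - k < length (filter (\<lambda>v. v \<le> z) S)"
    unfolding os using assms lS by (intro sorted_le_count sS) auto
  also have "\<dots> \<longleftrightarrow> card {i\<in>{..<n}. z < x i} < k" using c1 c2 assms by linarith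
  finally show ?thesis .
qed


lemma (in prob_space) count_prob:
  fixes Xs :: "nat \<Rightarrow> 'a \<Rightarrow> real"
  assumes indep: "indep_vars (\<lambda>_. borel) Xs {..<n}" and n: "1 \<le> n"
    and q: "\<And>i. i < n \<Longrightarrow> prob {\<omega> \<in> space M. z < Xs i \<omega>} = q"
  shows "{\<omega>\<in>space M. card {i\<in>{..<n}. z < Xs i \<omega>} < k} \<in> events"
    "prob {\<omega>\<in>space M. card {i\<in>{..<n}. z < Xs i \<omega>} < k} = Bn n k q"
proof -
  have rv[measurable]: "\<And>i. i < n \<Longrightarrow> Xs i \<in> borel_measurable M"
    using indep unfolding indep_vars_def by auto
  have isets: "indep_sets (\<lambda>i. sigma_sets (space M) {Xs i -` A \<inter> space M |A. A \<in> sets borel}) {..<n}"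
    using indep unfolding indep_vars_def by auto
  define B where "B S i = (if i \<in> S then {z<..} else {..z})" for S :: "nat set" and i
  define A where "A S i = Xs i -` B S i \<inter> space M" for S i
  define E where "E S = (\<Inter>i\<in>{..<n}. A S i)" for S
  define SS where "SS = {S. S \<subseteq> {..<n} \<and> card S < k}"
  have finSS: "finite SS" unfolding SS_def by (rule finite_subset[of _ "Pow {..<n}"]) auto
  have A_ev: "i < n \<Longrightarrow> A S i \<in> events" for S i
    unfolding A_def B_def by (auto intro!: measurable_sets[OF rv])
  have E_ev: "E S \<in> events" for S
    unfolding E_def using n A_ev by (intro sets.finite_INT) (auto simp: lessThan_empty_iff)
  have E_eq: "S \<subseteq> {..<n} \<Longrightarrow> E S = {\<omega>\<in>space M. {i\<in>{..<n}. z < Xs i \<omega>} = S}" for S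
    unfolding E_def A_def B_def using n by (auto split: if_splits simp: lessThan_empty_iff)
  have U: "{\<omega>\<in>space M. card {i\<in>{..<n}. z < Xs i \<omega>} < k} = (\<Union>S\<in>SS. E S)"
  proof (intro equalityI subsetI)
    fix \<omega> assume w: "\<omega> \<in> {\<omega>\<in>space M. card {i\<in>{..<n}. z < Xs i \<omega>} < k}"
    define S where "S = {i\<in>{..<n}. z < Xs i \<omega>}"
    have "S \<in> SS" using w by (auto simp: SS_def S_def)
    moreover have "\<omega> \<in> E S" using w E_eq[of S] by (auto simp: S_def)
    ultimately show "\<omega> \<in> (\<Union>S\<in>SS. E S)" by auto
  next
    fix \<omega> assume "\<omega> \<in> (\<Union>S\<in>SS. E S)"
    then obtain S where "S \<in> SS" "\<omega> \<in> E S" by auto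
    then show "\<omega> \<in> {\<omega>\<in>space M. card {i\<in>{..<n}. z < Xs i \<omega>} < k}"
      using E_eq[of S] by (auto simp: SS_def)
  qed
  show "{\<omega>\<in>space M. card {i\<in>{..<n}. z < Xs i \<omega>} < k} \<in> events"
    unfolding U using finSS E_ev by auto
  have disj: "disjoint_family_on E SS"
    unfolding disjoint_family_on_def using E_eq by (auto simp: SS_def)
  have probA: "prob (A S i) = (if i \<in> S then q else 1 - q)" if i: "i < n" for S i
  proof (cases "i \<in> S")
    case True
    have "A S i = {\<omega> \<in> space M. z < Xs i \<omega>}" using True by (auto simp: A_def B_def)
    then show ?thesis using True q[OF i] by simp
  next
    case False
    have "A S i = space M - {\<omega> \<in> space M. z < Xs i \<omega>}"
      using False by (auto simp: A_def B_def)
    then show ?thesis using False q[OF i] prob_compl[of "{\<omega> \<in> space M. z < Xs i \<omega>}"] rv[OF i] by simp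
  qed
  have probE: "S \<subseteq> {..<n} \<Longrightarrow> prob (E S) = q ^ card S * (1 - q) ^ (n - card S)" for S
  proof -
    assume S: "S \<subseteq> {..<n}"
    have "prob (E S) = (\<Prod>i\<in>{..<n}. prob (A S i))"
      unfolding E_def
    proof (rule indep_setsD[OF isets])
      show "\<forall>j\<in>{..<n}. A S j \<in> sigma_sets (space M) {Xs j -` A \<inter> space M |A. A \<in> sets borel}"
        unfolding A_def by (auto intro!: sigma_sets.Basic exI[of _ "B S _"] simp: B_def)
    qed (use n in \<open>auto simp: lessThan_empty_iff\<close>)
    also have "\<dots> = (\<Prod>i\<in>{..<n}. if i \<in> S then q else 1 - q)"
      using probA by (intro prod.cong) auto
    also have "\<dots> = q ^ card ({..<n} \<inter> S) * (1 - q) ^ card ({..<n} \<inter> - S)"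
      by (subst prod.If_cases) auto
    also have "card ({..<n} \<inter> S) = card S" using S by (simp add: Int_absorb1)
    also have "card ({..<n} \<inter> - S) = n - card S"
    proof -
      have "{..<n} \<inter> - S = {..<n} - S" by auto
      then show ?thesis using S by (simp add: card_Diff_subset finite_subset)
    qed
    finally show ?thesis .
  qed
  have "prob {\<omega>\<in>space M. card {i\<in>{..<n}. z < Xs i \<omega>} < k} = (\<Sum>S\<in>SS. prob (E S))"
    unfolding U using finSS E_ev disj by (intro finite_measure_finite_Union) auto
  also have "\<dots> = (\<Sum>S\<in>SS. q ^ card S * (1 - q) ^ (n - card S))"
    using probE by (intro sum.cong) (auto simp: SS_def)
  also have "\<dots> = (\<Sum>j\<in>{..<k}. \<Sum>S\<in>{S\<in>SS. card S = j}. q ^ card S * (1 - q) ^ (n - card S))"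
    using finSS by (intro sum.group[symmetric]) (auto simp: SS_def)
  also have "\<dots> = (\<Sum>j\<in>{..<k}. real (n choose j) * q ^ j * (1 - q) ^ (n - j))"
  proof (intro sum.cong refl)
    fix j assume j: "j \<in> {..<k}"
    have eqs: "{S\<in>SS. card S = j} = {S. S \<subseteq> {..<n} \<and> card S = j}" using j by (auto simp: SS_def)
    have "(\<Sum>S\<in>{S\<in>SS. card S = j}. q ^ card S * (1 - q) ^ (n - card S))
        = (\<Sum>S\<in>{S. S \<subseteq> {..<n} \<and> card S = j}. q ^ j * (1 - q) ^ (n - j))"
      unfolding eqs by (intro sum.cong) auto
    also have "\<dots> = real (card {S. S \<subseteq> {..<n} \<and> card S = j}) * (q ^ j * (1 - q) ^ (n - j))"
      by simp
    also have "card {S. S \<subseteq> {..<n} \<and> card S = j} = n choose j"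
      using n_subsets[of "{..<n}" j] by simp
    finally show "(\<Sum>S\<in>{S\<in>SS. card S = j}. q ^ card S * (1 - q) ^ (n - card S)) = real (n choose j) * q ^ j * (1 - q) ^ (n - j)"
      by (simp add: mult.assoc)
  qed
  finally show "prob {\<omega>\<in>space M. card {i\<in>{..<n}. z < Xs i \<omega>} < k} = Bn n k q"
    by (simp add: Bn_def)
qed


lemma Bn_nonneg: "0 \<le> p \<Longrightarrow> p \<le> 1 \<Longrightarrow> 0 \<le> Bn n k p"
  unfolding Bn_def by (intro sum_nonneg) auto

lemma sum_bound:
  assumes "2 \<le> k" "k \<le> n"
  shows "(\<Sum>j=k..n. 1 / (real j)\<^sup>2) \<le> real (n - k + 1) / (real k - 1)\<^sup>2"
proof -
  have "(\<Sum>j=k..n. 1 / (real j)\<^sup>2) \<le> (\<Sum>j=k..n. 1 / (real k - 1)\<^sup>2)"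
  proof (intro sum_mono)
    fix j assume "j \<in> {k..n}"
    then have "real k - 1 \<le> real j" "0 < real k - 1" using assms by auto
    then show "1 / (real j)\<^sup>2 \<le> 1 / (real k - 1)\<^sup>2"
      by (intro divide_left_mono power_mono) auto
  qed
  also have "\<dots> = real (n - k + 1) / (real k - 1)\<^sup>2"
    using assms by (simp add: Suc_diff_le)
  finally show ?thesis .
qed

theorem lemma2:
  fixes M :: "'a measure" and Xs :: "nat \<Rightarrow> 'a \<Rightarrow> real"
    and f :: "real \<Rightarrow> real" and n k :: nat and L :: real
  assumes "prob_space M"
    and f_meas: "f \<in> borel_measurable borel"
    and f_nonneg: "\<And>x. f x \<ge> 0"
    and f_supp: "\<And>x. x < 0 \<Longrightarrow> f x = 0"
    and f_prob: "prob_space (density lborel (\<lambda>t. ennreal (f t)))"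
    and rv: "\<And>i. i < n \<Longrightarrow> Xs i \<in> borel_measurable M"
    and indep: "prob_space.indep_vars M (\<lambda>_. borel) Xs {..<n}"
    and distr: "\<And>i. i < n \<Longrightarrow> distr M borel (Xs i) = density lborel (\<lambda>t. ennreal (f t))"
    and IHR: "\<And>x1 x2. 0 \<le> x2 \<Longrightarrow> x2 \<le> x1 \<Longrightarrow> hazard f x2 \<le> hazard f x1"
    and L_def: "L = (INF x\<in>{0..}. hazard f x)"
    and L_pos: "L > 0"
    and n: "n \<ge> 2"
    and k: "2 \<le> k" "k \<le> n"
  defines "Xk \<equiv> (\<lambda>\<omega>. order_stat n k (\<lambda>i. Xs i \<omega>))"
    and "vl \<equiv> 2 * real (n - k + 1) / ((real k - 1)^2 * L^2)"
  shows "(\<forall>lam::real\<ge>0. ln (prob_space.expectation M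
              (\<lambda>\<omega>. exp (lam * (prob_space.expectation M Xk - Xk \<omega>))))
            \<le> lam^2 * vl / 2) \<and>
         (\<forall>gam::real\<ge>0. measure M {\<omega> \<in> space M.
              prob_space.expectation M Xk - Xk \<omega> \<ge> sqrt (2 * vl * gam)}
            \<le> exp (- gam))"
proof -
  interpret M: prob_space M by fact
  have k1: "1 \<le> k" and kn: "k \<le> n" and n1: "1 \<le> n" using k by auto
  have hn: "0 \<le> hazard f y" for y
  proof -
    interpret F: prob_space "density lborel (\<lambda>t. ennreal (f t))" by (rule f_prob)
    have "cdf_of_density f y \<le> 1" unfolding cdf_of_density_def by simp
    then show ?thesis unfolding hazard_def using f_nonneg[of y] by simp
  qed
  have Lle: "L \<le> hazard f x" if "0 \<le> x" for x
    unfolding L_def by (rule cINF_lower) (use that hn in \<open>auto intro!: bdd_belowI[where m=0]\<close>)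
  interpret H: hz f L
    by (rule hz.intro[OF f_meas f_nonneg f_supp f_prob Lle L_pos])
  define \<nu> where "\<nu> = nu k n"
  interpret V: prob_space \<nu> unfolding \<nu>_def by (rule prob_space_nu[OF k1 kn])
  have sV[measurable_cong, simp]: "sets \<nu> = sets borel" by (simp add: \<nu>_def)
  have spV[simp]: "space \<nu> = UNIV" by (simp add: \<nu>_def nu_def)
  have q: "M.prob {\<omega> \<in> space M. z < Xs i \<omega>} = H.G z" if i: "i < n" for z i
  proof -
    have "M.prob {\<omega> \<in> space M. z < Xs i \<omega>} = measure (distr M borel (Xs i)) {z<..}"
      using rv[OF i] by (subst measure_distr) (auto intro!: arg_cong[where f="M.prob"])
    also have "\<dots> = H.G z" unfolding distr[OF i] H.G_eq ..
    finally show ?thesis .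
  qed
  have Xk_le: "{\<omega>\<in>space M. Xk \<omega> \<le> z} = {\<omega>\<in>space M. card {i\<in>{..<n}. z < Xs i \<omega>} < k}" for z
    using order_stat_le_iff[OF k1 kn] by (auto simp: Xk_def)
  have Xk_meas[measurable]: "Xk \<in> borel_measurable M"
    unfolding borel_measurable_iff_le
  proof
    fix z
    show "{w \<in> space M. Xk w \<le> z} \<in> sets M"
      unfolding Xk_le by (rule M.count_prob(1)[OF indep n1 q])
  qed
  have PXk: "M.prob {\<omega>\<in>space M. Xk \<omega> \<le> z} = Bn n k (H.G z)" for z
    unfolding Xk_le by (rule M.count_prob(2)[OF indep n1 q])
  have psim[measurable]: "H.psi \<in> borel_measurable borel" by (rule borel_measurable_mono[OF H.psi_mono])
  have psiV[measurable]: "H.psi \<in> borel_measurable \<nu>" by measurable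
  have law: "distr M borel Xk = distr \<nu> borel H.psi"
  proof (rule cdf_unique)
    show "real_distribution (distr M borel Xk)"
      unfolding real_distribution_def real_distribution_axioms_def by (auto intro: M.prob_space_distr)
    show "real_distribution (distr \<nu> borel H.psi)"
      unfolding real_distribution_def real_distribution_axioms_def by (auto intro: V.prob_space_distr)
    show "cdf (distr M borel Xk) = cdf (distr \<nu> borel H.psi)"
    proof
      fix z
      have "cdf (distr M borel Xk) z = M.prob {\<omega>\<in>space M. Xk \<omega> \<le> z}"
        unfolding cdf_def by (subst measure_distr) (auto intro!: arg_cong[where f="M.prob"])
      also have "\<dots> = Bn n k (H.G z)" by (rule PXk)
      also have "\<dots> = measure \<nu> {w. H.psi w \<le> z}"
      proof (cases "0 \<le> z")
        case True
        have Gp: "0 < H.G z" by (rule H.G_pos[OF True])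
        have l0: "0 \<le> - ln (H.G z)" using Gp H.G_le1[of z] by simp
        have "measure \<nu> {w. H.psi w \<le> z} = measure \<nu> {..- ln (H.G z)}"
          by (simp add: H.psi_set[OF True])
        also have "\<dots> = Bn n k (exp (- (- ln (H.G z))))"
          unfolding \<nu>_def measure_def emeasure_nu_atMost[OF kn l0]
          using Bn_nonneg[of "exp (- (- ln (H.G z)))"] Gp H.G_le1[of z] by simp
        also have "\<dots> = Bn n k (H.G z)" using Gp by simp
        finally show ?thesis by simp
      next
        case False
        have "{w. H.psi w \<le> z} = {}" using False H.psi_nonneg by (auto simp: not_le) (smt (verit))
        then show ?thesis using False H.G_nonpos[of z] Bn_one[OF kn] by simp
      qed
      also have "\<dots> = cdf (distr \<nu> borel H.psi) z"
        unfolding cdf_def by (subst measure_distr) (auto intro!: arg_cong[where f="measure \<nu>"])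
      finally show "cdf (distr M borel Xk) z = cdf (distr \<nu> borel H.psi) z" .
    qed
  qed
  have int_eq: "(\<integral>\<omega>. h (Xk \<omega>) \<partial>M) = (\<integral>w. h (H.psi w) \<partial>\<nu>)" if hm: "h \<in> borel_measurable borel" for h :: "real \<Rightarrow> real"
  proof -
    have "(\<integral>\<omega>. h (Xk \<omega>) \<partial>M) = (\<integral>x. h x \<partial>distr M borel Xk)"
      using integral_distr[OF Xk_meas hm] by simp
    also have "\<dots> = (\<integral>x. h x \<partial>distr \<nu> borel H.psi)" unfolding law ..
    also have "\<dots> = (\<integral>w. h (H.psi w) \<partial>\<nu>)"
      using integral_distr[OF psiV hm] by simp
    finally show ?thesis .
  qed
  have meas_eq: "M.prob {\<omega>\<in>space M. Xk \<omega> \<in> A} = measure \<nu> {w. H.psi w \<in> A}" if A: "A \<in> sets borel" for A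
  proof -
    have "M.prob {\<omega>\<in>space M. Xk \<omega> \<in> A} = measure (distr M borel Xk) A"
      using A by (subst measure_distr) (auto intro!: arg_cong[where f="M.prob"])
    also have "\<dots> = measure (distr \<nu> borel H.psi) A" unfolding law ..
    also have "\<dots> = measure \<nu> {w. H.psi w \<in> A}"
      using A by (subst measure_distr) (auto intro!: arg_cong[where f="measure \<nu>"])
    finally show ?thesis .
  qed
  define c where "c = prob_space.expectation M Xk"
  have c_eq: "c = (\<integral>w. H.psi w \<partial>\<nu>)" unfolding c_def using int_eq[of "\<lambda>x. x"] by simp
  have ipsi: "integrable \<nu> H.psi"
    by (rule integrable_lip[OF V.finite_measure_axioms _ H.psi_lip _ psiV])
       (use integrable_nu_x[OF k1 kn] L_pos in \<open>auto simp: \<nu>_def\<close>)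
  define S where "S = (\<Sum>j=k..n. 1 / (real j)\<^sup>2)"
  have Sb: "(1 / L)\<^sup>2 * S \<le> vl / 2"
  proof -
    have "S \<le> real (n - k + 1) / (real k - 1)\<^sup>2" unfolding S_def by (rule sum_bound[OF k])
    then have "(1 / L)\<^sup>2 * S \<le> (1 / L)\<^sup>2 * (real (n - k + 1) / (real k - 1)\<^sup>2)"
      by (intro mult_left_mono) auto
    also have "\<dots> = vl / 2"
    proof -
      have "real k - 1 \<noteq> 0" using k by simp
      moreover have "L \<noteq> 0" using L_pos by simp
      ultimately show ?thesis by (simp add: vl_def field_simps)
    qed
    finally show ?thesis .
  qed
  have mgf: "(\<integral>w. exp (lam * (c - H.psi w)) \<partial>\<nu>) \<le> exp (lam\<^sup>2 * vl / 2)"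
    "1 \<le> (\<integral>w. exp (lam * (c - H.psi w)) \<partial>\<nu>)"
    "integrable \<nu> (\<lambda>w. exp (lam * (c - H.psi w)))" if lam: "0 \<le> lam" for lam
  proof -
    show ie: "integrable \<nu> (\<lambda>w. exp (lam * (c - H.psi w)))"
    proof (rule V.integrable_const_bound[where B="exp (lam * c)"])
      show "AE x in \<nu>. norm (exp (lam * (c - H.psi x))) \<le> exp (lam * c)"
        using H.psi_nonneg lam by (auto intro!: AE_I2 mult_left_mono simp: algebra_simps)
    qed measurable
    have R: "(\<integral>\<^sup>+w. ennreal (exp (lam * ((\<integral>t. H.psi t \<partial>nu k n) - H.psi w))) \<partial>nu k n)
      \<le> ennreal (exp (lam\<^sup>2 * (1 / L)\<^sup>2 * S))"
      unfolding S_def using L_pos lam by (intro lemmaR[OF k1 kn] H.psi_mono H.psi_lip) auto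
    have "ennreal (\<integral>w. exp (lam * (c - H.psi w)) \<partial>\<nu>) = (\<integral>\<^sup>+w. ennreal (exp (lam * (c - H.psi w))) \<partial>\<nu>)"
      using ie by (intro nn_integral_eq_integral[symmetric]) auto
    also have "\<dots> \<le> ennreal (exp (lam\<^sup>2 * (1 / L)\<^sup>2 * S))"
      using R unfolding c_eq \<nu>_def .
    finally have "(\<integral>w. exp (lam * (c - H.psi w)) \<partial>\<nu>) \<le> exp (lam\<^sup>2 * (1 / L)\<^sup>2 * S)"
      by (simp add: ennreal_le_iff)
    also have "\<dots> \<le> exp (lam\<^sup>2 * vl / 2)"
      using Sb lam by (simp add: mult.assoc mult_left_mono)
    finally show "(\<integral>w. exp (lam * (c - H.psi w)) \<partial>\<nu>) \<le> exp (lam\<^sup>2 * vl / 2)" .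
    have "(\<integral>w. 1 + lam * (c - H.psi w) \<partial>\<nu>) \<le> (\<integral>w. exp (lam * (c - H.psi w)) \<partial>\<nu>)"
      using ie ipsi by (intro integral_mono) (auto simp: exp_ge_add_one_self)
    moreover have "(\<integral>w. 1 + lam * (c - H.psi w) \<partial>\<nu>) = 1"
      using ipsi by (simp add: c_eq V.prob_space[simplified] algebra_simps)
    ultimately show "1 \<le> (\<integral>w. exp (lam * (c - H.psi w)) \<partial>\<nu>)" by simp
  qed
  have mgfM: "prob_space.expectation M (\<lambda>\<omega>. exp (lam * (c - Xk \<omega>))) = (\<integral>w. exp (lam * (c - H.psi w)) \<partial>\<nu>)" for lam
    using int_eq[of "\<lambda>x. exp (lam * (c - x))"] by simp
  have vl_pos: "0 < vl" using k L_pos by (simp add: vl_def)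
  show ?thesis
  proof (intro conjI allI impI)
    fix lam :: real assume lam: "0 \<le> lam"
    have "ln (\<integral>w. exp (lam * (c - H.psi w)) \<partial>\<nu>) \<le> ln (exp (lam\<^sup>2 * vl / 2))"
      using mgf[OF lam] by (subst ln_le_cancel_iff) auto
    then show "ln (prob_space.expectation M (\<lambda>\<omega>. exp (lam * (prob_space.expectation M Xk - Xk \<omega>)))) \<le> lam\<^sup>2 * vl / 2"
      using mgfM[of lam] by (simp add: c_def)
  next
    fix gam :: real assume gam: "0 \<le> gam"
    have set_eq: "{\<omega> \<in> space M. prob_space.expectation M Xk - Xk \<omega> \<ge> sqrt (2 * vl * gam)}
        = {\<omega> \<in> space M. Xk \<omega> \<in> {x. sqrt (2 * vl * gam) \<le> c - x}}"
      by (auto simp: c_def)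
    have "{x. sqrt (2 * vl * gam) \<le> c - x} \<in> sets borel" by measurable
    then have P: "measure M {\<omega> \<in> space M. prob_space.expectation M Xk - Xk \<omega> \<ge> sqrt (2 * vl * gam)}
        = measure \<nu> {w. sqrt (2 * vl * gam) \<le> c - H.psi w}"
      unfolding set_eq by (subst meas_eq) auto
    show "measure M {\<omega> \<in> space M. prob_space.expectation M Xk - Xk \<omega> \<ge> sqrt (2 * vl * gam)} \<le> exp (- gam)"
    proof (cases "gam = 0")
      case True
      then show ?thesis by simp
    next
      case False
      then have gp: "0 < gam" using gam by simp
      define lam where "lam = sqrt (2 * gam / vl)"
      define t where "t = sqrt (2 * vl * gam)"
      have lp: "0 < lam" using gp vl_pos by (simp add: lam_def)
      have "measure \<nu> {w \<in> space \<nu>. t \<le> c - H.psi w} \<le> exp (- lam * t) * (\<integral>w\<in>space \<nu>. exp (lam * (c - H.psi w)) \<partial>\<nu>)"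
        by (rule V.Chernoff_ineq_ge[OF lp])
           (use mgf(3)[OF less_imp_le[OF lp]] in \<open>auto simp: set_integrable_def\<close>)
      also have "(\<integral>w\<in>space \<nu>. exp (lam * (c - H.psi w)) \<partial>\<nu>) = (\<integral>w. exp (lam * (c - H.psi w)) \<partial>\<nu>)"
        by (simp add: set_lebesgue_integral_def)
      also have "exp (- lam * t) * \<dots> \<le> exp (- lam * t) * exp (lam\<^sup>2 * vl / 2)"
        using mgf(1)[OF less_imp_le[OF lp]] by (intro mult_left_mono) auto
      also have "\<dots> = exp (- gam)"
      proof -
        have "lam\<^sup>2 * vl / 2 = gam" using gp vl_pos by (simp add: lam_def)
        moreover have "lam * t = 2 * gam"
        proof -
          have "lam * t = sqrt (2 * gam / vl * (2 * vl * gam))" unfolding lam_def t_def by (rule real_sqrt_mult[symmetric])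
          also have "2 * gam / vl * (2 * vl * gam) = (2 * gam)\<^sup>2" using vl_pos by (simp add: field_simps power2_eq_square)
          finally have "lam * t = sqrt ((2 * gam)\<^sup>2)" .
          then show ?thesis using gp by (simp only: real_sqrt_abs)
        qed
        ultimately show ?thesis by (simp add: exp_add[symmetric])
      qed
      finally show ?thesis using P by (simp add: t_def)
    qed
  qed
qed


end
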